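(* Let $q\in\{2,4\}$ and let $n,\kappa$ be integers with $1\le \kappa<n$. Let $A_{\kappa\text{-WMU},q,n}$ denote the maximum size of a $\kappa$-weakly mutually uncorrelated code $\mathcal{C}\subseteq \mathbb{F}_q^n$. Then \[ c_q\,\frac{q^{n}}{n-\kappa+1}\le A_{\kappa\text{-WMU},q,n}\le \frac{q^{n}}{n-\kappa+1},\qquad\text{where } c_q=\frac{(q-1)^2(2q-1)}{4q^4}. \]
   Context: $\mathbb{F}_q$ is the finite field with $q$ elements. For a sequence $\mathbf{a}=(a_1,\dots,a_n)$ write $\mathbf{a}_i^j=(a_i,\dots,a_j)$ for $i\le j$. A code $\mathcal{C}\subseteq\mathbb{F}_q^n$ is $\kappa$-weakly mutually uncorrelated ($\kappa$-WMU), for $1\le\kappa<n$, if for all (not necessarily distinct) $\mathbf{a},\mathbf{b}\in\mathcal{C}$ and all $l$ with $\kappa\le l<n$ one has $\mathbf{a}_1^{l}\neq \mathbf{b}_{n-l+1}^{n}$, i.e. no proper prefix of length at least $\kappa$ of a codeword equals a suffix of a codeword (including itself). *)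

theory Defs
  imports Complex_Main
begin

text \<open>Words of length n over the alphabet 'a (e.g. the finite field F_q) are lists of length n.
  For a = (a_1..a_n): the prefix a_1^l is take l a, the suffix a_{n-l+1}^n is drop (n - l) a.\<close>

definition words :: "nat \<Rightarrow> 'a list set" where
  "words n = {xs. length xs = n}"

definition kappa_WMU :: "nat \<Rightarrow> nat \<Rightarrow> 'a list set \<Rightarrow> bool" where
  "kappa_WMU \<kappa> n C \<longleftrightarrow> C \<subseteq> words n \<and>
     (\<forall>a\<in>C. \<forall>b\<in>C. \<forall>l. \<kappa> \<le> l \<and> l < n \<longrightarrow> take l a \<noteq> drop (n - l) b)"

definition A_WMU :: "'a itself \<Rightarrow> nat \<Rightarrow> nat \<Rightarrow> nat" where
  "A_WMU _ \<kappa> n = Max {card (C :: 'a list set) | C. kappa_WMU \<kappa> n C}"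

end

theory Submission
  imports Defs
begin

lemma words_finite: "finite (words n :: ('a::finite) list set)"
proof -
  have "words n = {xs::'a list. set xs \<subseteq> UNIV \<and> length xs = n}" by (auto simp: words_def)
  thus ?thesis using finite_lists_length_eq[OF finite_UNIV] by simp
qed

lemma words_card: "card (words n :: ('a::finite) list set) = card (UNIV::'a set) ^ n"
proof -
  have "words n = {xs::'a list. set xs \<subseteq> UNIV \<and> length xs = n}" by (auto simp: words_def)
  thus ?thesis using card_lists_length_eq[OF finite_UNIV] by simp
qed

lemma shift_clash:
  assumes W: "kappa_WMU \<kappa> n C" and d: "n - \<kappa> + 1 = d" and k: "\<kappa> < n"
    and c: "c \<in> C" and c': "c' \<in> C" and lt: "i < i'" and i': "i' < d"
    and eq: "u @ c @ v = u' @ c' @ v'" and lu: "length u = i" and lu': "length u' = i'"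
  shows False
proof -
  have lc: "length c = n" "length c' = n" using W c c' by (auto simp: kappa_WMU_def words_def)
  define w where "w = u @ c @ v"
  define j where "j = i' - i"
  have c1: "c = take n (drop i w)" using lu lc by (simp add: w_def)
  have c2: "c' = take n (drop i' w)" using lu' lc eq by (simp add: w_def)
  have "drop j c = take (n - j) c'"
    unfolding c1 c2 using lt by (simp add: j_def drop_take add.commute)
  moreover have "\<kappa> \<le> n - j" "n - j < n" using lt i' d k by (auto simp: j_def)
  moreover have "n - (n - j) = j" using lt i' d k by (auto simp: j_def)
  ultimately show False using W c c' unfolding kappa_WMU_def by metis
qed

lemma upper_nat:
  fixes C :: "('a::finite) list set"
  assumes W: "kappa_WMU \<kappa> n C" and k: "\<kappa> < n"
  shows "card C * (n - \<kappa> + 1) \<le> card (UNIV::'a set) ^ n"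
proof -
  define d where "d = n - \<kappa> + 1"
  define Q where "Q = card (UNIV::'a set)"
  have Q0: "Q > 0" by (simp add: Q_def finite_UNIV_card_ge_0)
  have fC: "finite C" using W words_finite[of n] by (auto simp: kappa_WMU_def intro: finite_subset)
  define S :: "(nat \<times> 'a list \<times> 'a list \<times> 'a list) set" where "S = Sigma {..<d} (\<lambda>i. words i \<times> C \<times> words (d - 1 - i))"
  define f where "f = (\<lambda>(i::nat, u::'a list, c::'a list, v::'a list). u @ c @ v)"
  have inj: "inj_on f S"
  proof (rule inj_onI)
    fix x y assume x: "x \<in> S" and y: "y \<in> S" and fe: "f x = f y"
    obtain i u c v where xe: "x = (i,u,c,v)" by (cases x) auto
    obtain i' u' c' v' where ye: "y = (i',u',c',v')" by (cases y) auto
    have h: "i < d" "length u = i" "c \<in> C" "length v = d - 1 - i"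
      "i' < d" "length u' = i'" "c' \<in> C" "length v' = d - 1 - i'"
      using x y by (auto simp: S_def xe ye words_def)
    have e: "u @ c @ v = u' @ c' @ v'" using fe by (simp add: f_def xe ye)
    have lc: "length c = n" "length c' = n" using W h by (auto simp: kappa_WMU_def words_def)
    consider "i < i'" | "i' < i" | "i = i'" by linarith
    thus "x = y"
    proof cases
      case 1 thus ?thesis using shift_clash[OF W d_def[symmetric] k h(3) h(7) 1 h(5) e h(2) h(6)] by simp
    next
      case 2 thus ?thesis using shift_clash[OF W d_def[symmetric] k h(7) h(3) 2 h(1) e[symmetric] h(6) h(2)] by simp
    next
      case 3
      then have "u = u'" "c @ v = c' @ v'" using e h by (auto simp: append_eq_append_conv)
      moreover then have "c = c'" "v = v'" using lc by (auto simp: append_eq_append_conv)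
      ultimately show ?thesis using 3 by (simp add: xe ye)
    qed
  qed
  have img: "f ` S \<subseteq> words (n + d - 1)"
    using W by (auto simp: f_def S_def words_def kappa_WMU_def d_def)
  have "card S = (\<Sum>i<d. Q ^ i * (card C * Q ^ (d - 1 - i)))"
    unfolding S_def
    by (subst card_SigmaI) (auto simp: words_finite fC card_cartesian_product words_card Q_def)
  also have "\<dots> = (\<Sum>i<d. card C * Q ^ (d - 1))"
  proof (rule sum.cong)
    fix i assume "i \<in> {..<d}"
    then have "Q ^ i * Q ^ (d - 1 - i) = Q ^ (d - 1)" by (simp add: power_add[symmetric])
    thus "Q ^ i * (card C * Q ^ (d - 1 - i)) = card C * Q ^ (d - 1)" by (metis mult.left_commute)
  qed simp
  also have "\<dots> = d * card C * Q ^ (d - 1)" by simp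
  finally have cS: "card S = d * card C * Q ^ (d - 1)" .
  have "card S \<le> card (words (n + d - 1) :: 'a list set)"
    using card_inj_on_le[OF inj img words_finite] .
  also have "\<dots> = Q ^ n * Q ^ (d - 1)" using d_def k by (simp add: words_card Q_def power_add[symmetric])
  finally have "(card C * d) * Q ^ (d - 1) \<le> Q ^ n * Q ^ (d - 1)" using cS by (simp add: ac_simps)
  thus ?thesis using Q0 by (simp add: d_def Q_def)
qed

lemma card_nth_sets:
  fixes A :: "nat \<Rightarrow> ('a::finite) set"
  shows "card {y. length y = r \<and> (\<forall>i<r. y!i \<in> A i)} = (\<Prod>i<r. card (A i))"
proof (induction r arbitrary: A)
  case 0
  then show ?case by simp
next
  case (Suc r)
  have e: "{y. length y = Suc r \<and> (\<forall>i<Suc r. y!i \<in> A i)}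
      = (\<lambda>(x,y). x # y) ` (A 0 \<times> {y. length y = r \<and> (\<forall>i<r. y!i \<in> A (Suc i))})"
  proof (rule set_eqI, rule iffI)
    fix z assume "z \<in> {y. length y = Suc r \<and> (\<forall>i<Suc r. y!i \<in> A i)}"
    then obtain x y where z: "z = x # y" "length y = r" "\<forall>i<Suc r. z!i \<in> A i"
      by (auto simp: length_Suc_conv)
    then have "x \<in> A 0" "\<forall>i<r. y!i \<in> A (Suc i)" by force+
    thus "z \<in> (\<lambda>(x,y). x # y) ` (A 0 \<times> {y. length y = r \<and> (\<forall>i<r. y!i \<in> A (Suc i))})"
      using z by auto
  next
    fix z assume "z \<in> (\<lambda>(x,y). x # y) ` (A 0 \<times> {y. length y = r \<and> (\<forall>i<r. y!i \<in> A (Suc i))})"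
    then show "z \<in> {y. length y = Suc r \<and> (\<forall>i<Suc r. y!i \<in> A i)}"
      by (auto simp: less_Suc_eq_0_disj)
  qed
  have inj: "inj_on (\<lambda>(x,y). x # y) X" for X :: "('a \<times> 'a list) set"
    by (auto simp: inj_on_def)
  show ?case unfolding e
    by (subst prod.lessThan_Suc_shift) (simp add: card_image[OF inj] card_cartesian_product Suc.IH)
qed

definition Aend :: "nat \<Rightarrow> nat \<Rightarrow> ('a::zero) set" where
  "Aend r i = (if i = 0 \<or> i = r - 1 then -{0} else UNIV)"
definition Abad :: "nat \<Rightarrow> nat \<Rightarrow> nat \<Rightarrow> nat \<Rightarrow> ('a::zero) set" where
  "Abad r k p i = (if i = 0 \<or> i = r - 1 then -{0} else if p \<le> i \<and> i < p + k then {0} else UNIV)"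

lemma card_nz: "card (-{0::'a::{finite,zero}}) = card (UNIV::'a set) - 1"
proof -
  have "-{0::'a} = UNIV - {0}" by auto
  thus ?thesis by (simp add: card_Diff_singleton)
qed

lemma card_Yset:
  assumes "2 \<le> r"
  shows "card {y. length y = r \<and> (\<forall>i<r. y!i \<in> (Aend r i :: ('a::{finite,zero}) set))}
    = (card (UNIV::'a set) - 1)^2 * card (UNIV::'a set) ^ (r - 2)"
proof -
  define Q where "Q = card (UNIV::'a set)"
  define P where "P = (\<lambda>i. i = 0 \<or> i = r - 1)"
  have "card {y. length y = r \<and> (\<forall>i<r. y!i \<in> (Aend r i :: 'a set))} = (\<Prod>i<r. card (Aend r i :: 'a set))"
    by (rule card_nth_sets)
  also have "\<dots> = (\<Prod>i<r. if P i then Q - 1 else Q)"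
    by (rule prod.cong) (auto simp: Aend_def P_def card_nz Q_def)
  also have "\<dots> = (\<Prod>i\<in>{..<r} \<inter> {x. P x}. Q - 1) * (\<Prod>i\<in>{..<r} \<inter> - {x. P x}. Q)"
    by (rule prod.If_cases) simp
  also have "{..<r} \<inter> {x. P x} = {0, r - 1}" using assms by (auto simp: P_def)
  also have "{..<r} \<inter> - {x. P x} = {..<r} - {0, r - 1}" by (auto simp: P_def)
  finally have e: "card {y. length y = r \<and> (\<forall>i<r. y!i \<in> (Aend r i :: 'a set))} = (Q-1)^2 * Q ^ card ({..<r} - {0, r - 1})"
    using assms by (simp add: power2_eq_square)
  have "card ({..<r} - {0, r - 1}) = r - 2" using assms by (subst card_Diff_subset) auto
  with e show ?thesis using assms by (simp add: Q_def power2_eq_square)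
qed

lemma card_Bset:
  assumes "1 \<le> p" "p + k + 1 \<le> r"
  shows "card {y. length y = r \<and> (\<forall>i<r. y!i \<in> (Abad r k p i :: ('a::{finite,zero}) set))}
    = (card (UNIV::'a set) - 1)^2 * card (UNIV::'a set) ^ (r - 2 - k)"
proof -
  define Q where "Q = card (UNIV::'a set)"
  define P where "P = (\<lambda>i. i = 0 \<or> i = r - 1)"
  define R where "R = (\<lambda>i. p \<le> i \<and> i < p + k)"
  have "card {y. length y = r \<and> (\<forall>i<r. y!i \<in> (Abad r k p i :: 'a set))} = (\<Prod>i<r. card (Abad r k p i :: 'a set))"
    by (rule card_nth_sets)
  also have "\<dots> = (\<Prod>i<r. if P i then Q - 1 else if R i then 1 else Q)"
    by (rule prod.cong) (auto simp: Abad_def P_def R_def card_nz Q_def)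
  also have "\<dots> = (\<Prod>i\<in>{..<r} \<inter> {x. P x}. Q - 1) * (\<Prod>i\<in>{..<r} \<inter> - {x. P x}. if R i then 1 else Q)"
    by (rule prod.If_cases) simp
  also have "(\<Prod>i\<in>{..<r} \<inter> - {x. P x}. if R i then 1 else Q)
     = (\<Prod>i\<in>({..<r} \<inter> - {x. P x}) \<inter> {x. R x}. 1) * (\<Prod>i\<in>({..<r} \<inter> - {x. P x}) \<inter> - {x. R x}. Q)"
    by (rule prod.If_cases) simp
  also have "{..<r} \<inter> {x. P x} = {0, r - 1}" using assms by (auto simp: P_def)
  also have "({..<r} \<inter> - {x. P x}) \<inter> - {x. R x} = {..<r} - ({0, r - 1} \<union> {p..<p+k})"
    by (auto simp: P_def R_def)
  finally have e: "card {y. length y = r \<and> (\<forall>i<r. y!i \<in> (Abad r k p i :: 'a set))} = (Q-1)^2 * Q ^ card ({..<r} - ({0, r - 1} \<union> {p..<p+k}))"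
    using assms by (simp add: power2_eq_square)
  have "card ({..<r} - ({0, r - 1} \<union> {p..<p+k})) = r - 2 - k"
  proof -
    have "card ({0, r - 1} \<union> {p..<p+k}) = 2 + k"
      using assms by (subst card_Un_disjoint) auto
    moreover have "{0, r - 1} \<union> {p..<p+k} \<subseteq> {..<r}" using assms by auto
    ultimately show ?thesis by (simp add: card_Diff_subset)
  qed
  with e show ?thesis using assms by (simp add: Q_def power2_eq_square)
qed

definition nzw :: "nat \<Rightarrow> ('a::zero) list \<Rightarrow> bool" where
  "nzw k y = (\<forall>p. p + k \<le> length y \<longrightarrow> (\<exists>i<k. y!(p+i) \<noteq> 0))"
definition Gset :: "nat \<Rightarrow> nat \<Rightarrow> ('a::zero) list set" where
  "Gset k r = {y. length y = r \<and> (\<forall>i<r. y!i \<in> Aend r i) \<and> nzw k y}"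

lemma card_G:
  assumes k: "1 \<le> k" and r: "2 \<le> r"
  shows "(card (UNIV::'a set) - 1)^2 * card (UNIV::'a set) ^ (r - 2)
     \<le> card (Gset k r :: ('a::{finite,zero}) list set) + (r - k - 1) * ((card (UNIV::'a set) - 1)^2 * card (UNIV::'a set) ^ (r - 2 - k))"
proof -
  define Q where "Q = card (UNIV::'a set)"
  define Y where "Y = {y. length y = r \<and> (\<forall>i<r. y!i \<in> (Aend r i :: 'a set))}"
  define B where "B = (\<lambda>p. {y. length y = r \<and> (\<forall>i<r. y!i \<in> (Abad r k p i :: 'a set))})"
  have fin: "finite (X :: 'a list set)" if "X \<subseteq> words r" for X
    using words_finite finite_subset that by blast
  have sub: "Y - (\<Union>p\<in>{1..<r-k}. B p) \<subseteq> Gset k r"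
  proof
    fix y assume "y \<in> Y - (\<Union>p\<in>{1..<r-k}. B p)"
    then have yY: "length y = r" "\<forall>i<r. y!i \<in> (Aend r i :: 'a set)"
      and nb: "\<forall>p\<in>{1..<r-k}. y \<notin> B p" by (auto simp: Y_def)
    have "nzw k y" unfolding nzw_def
    proof (intro allI impI, rule ccontr)
      fix p assume pk: "p + k \<le> length y" and z: "\<not> (\<exists>i<k. y!(p+i) \<noteq> 0)"
      have "y!0 \<in> (Aend r 0 :: 'a set)" using yY r by auto
      then have y0: "y!0 \<noteq> 0" by (simp add: Aend_def)
      have "y!(r-1) \<in> (Aend r (r-1) :: 'a set)" using yY r by auto
      then have yl: "y!(r-1) \<noteq> 0" by (simp add: Aend_def)
      consider "p = 0" | "p + k = r" | "1 \<le> p" "p < r - k" using pk yY by linarith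
      thus False
      proof cases
        case 1 thus False using z y0 k by auto
      next
        case 2
        have "k - 1 < k" using k by simp
        then have "y!(p + (k-1)) = 0" using z by blast
        moreover have "p + (k - 1) = r - 1" using 2 k by linarith
        ultimately show False using yl by simp
      next
        case 3
        have "y \<in> B p" unfolding B_def
        proof (intro CollectI conjI allI impI)
          show "length y = r" by (rule yY(1))
          fix i assume i: "i < r"
          show "y!i \<in> Abad r k p i"
          proof (cases "i = 0 \<or> i = r - 1")
            case True thus ?thesis using yY i by (auto simp: Abad_def Aend_def)
          next
            case False
            show ?thesis
            proof (cases "p \<le> i \<and> i < p + k")
              case True
              then have "i - p < k" by linarith
              then have "y!(p + (i - p)) = 0" using z by blast
              moreover have "p + (i - p) = i" using True by simp
              ultimately show ?thesis using True False by (simp add: Abad_def)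
            next
              case False2: False
              thus ?thesis using False by (auto simp: Abad_def)
            qed
          qed
        qed
        thus False using nb 3 by auto
      qed
    qed
    thus "y \<in> Gset k r" using yY by (simp add: Gset_def)
  qed
  have fU: "finite (\<Union>p\<in>{1..<r-k}. B p)" by (rule fin) (auto simp: B_def words_def)
  have "card Y - card (\<Union>p\<in>{1..<r-k}. B p) \<le> card (Y - (\<Union>p\<in>{1..<r-k}. B p))"
    by (rule diff_card_le_card_Diff[OF fU])
  also have "\<dots> \<le> card (Gset k r :: 'a list set)"
    by (rule card_mono[OF fin sub]) (auto simp: Gset_def words_def)
  finally have 1: "card Y - card (\<Union>p\<in>{1..<r-k}. B p) \<le> card (Gset k r :: 'a list set)" .
  have "card (\<Union>p\<in>{1..<r-k}. B p) \<le> (\<Sum>p\<in>{1..<r-k}. card (B p))" by (rule card_UN_le) simp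
  also have "\<dots> = (\<Sum>p\<in>{1..<r-k}. (Q - 1)^2 * Q ^ (r - 2 - k))"
  proof (rule sum.cong)
    fix p assume "p \<in> {1..<r-k}"
    then have "1 \<le> p" "p + k + 1 \<le> r" by auto
    from card_Bset[OF this, where 'a='a] show "card (B p) = (Q - 1)^2 * Q ^ (r - 2 - k)"
      by (simp add: B_def Q_def)
  qed simp
  also have "\<dots> = (r - k - 1) * ((Q - 1)^2 * Q ^ (r - 2 - k))" by simp
  finally have 2: "card (\<Union>p\<in>{1..<r-k}. B p) \<le> (r - k - 1) * ((Q - 1)^2 * Q ^ (r - 2 - k))" .
  have 3: "card Y = (Q - 1)^2 * Q ^ (r - 2)" unfolding Y_def Q_def by (rule card_Yset[OF r])
  show ?thesis using 1 2 3 unfolding Q_def by linarith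
qed

definition Dc :: "nat \<Rightarrow> nat \<Rightarrow> ('a::zero) list set" where
  "Dc k m = (\<lambda>y. replicate k 0 @ y) ` Gset k (m - k)"

lemma Dc_MU:
  assumes k: "1 \<le> k" "k < m" and a: "a \<in> Dc k m" and b: "b \<in> Dc k m"
    and j: "1 \<le> j" "j < m"
  shows "take j a \<noteq> drop (m - j) b"
proof
  assume eq: "take j a = drop (m - j) b"
  define r where "r = m - k"
  obtain y where y: "a = replicate k 0 @ y" "y \<in> Gset k r" using a by (auto simp: Dc_def r_def)
  obtain y' where y': "b = replicate k 0 @ y'" "y' \<in> Gset k r" using b by (auto simp: Dc_def r_def)
  have r1: "1 \<le> r" using k by (simp add: r_def)
  have ly: "length y = r" "length y' = r" using y y' by (auto simp: Gset_def)
  have la: "length a = m" "length b = m" using y y' ly k by (auto simp: r_def)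
  have nth: "a!i = b!(m - j + i)" if "i < j" for i
  proof -
    have "(take j a)!i = (drop (m - j) b)!i" using eq by simp
    thus ?thesis using that la j by simp
  qed
  have bk: "b!t = y'!(t - k)" if "k \<le> t" for t using that y' by (simp add: nth_append)
  have ak: "a!t = 0" if "t < k" for t using that y by (simp add: nth_append)
  have "y'!0 \<in> (Aend r 0 :: 'a set)" using y' r1 by (auto simp: Gset_def)
  then have y0: "y'!0 \<noteq> 0" by (simp add: Aend_def)
  have "y'!(r-1) \<in> (Aend r (r-1) :: 'a set)" using y' r1 by (auto simp: Gset_def)
  then have yl: "y'!(r-1) \<noteq> 0" by (simp add: Aend_def)
  have nz: "nzw k y'" using y' by (simp add: Gset_def)
  show False
  proof (cases "j \<le> k")
    case True
    have "a!(j-1) = b!(m - j + (j-1))" using nth j by simp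
    moreover have "m - j + (j - 1) = m - 1" using j by simp
    moreover have "a!(j-1) = 0" using ak True j by simp
    moreover have "b!(m-1) = y'!(r-1)" using bk k by (simp add: r_def)
    ultimately show False using yl by simp
  next
    case False
    have bz: "b!(m - j + i) = 0" if "i < k" for i using nth[of i] ak[of i] that False by simp
    show False
    proof (cases "k \<le> m - j")
      case True
      define p where "p = m - j - k"
      have "p + k \<le> length y'" using ly False True j by (simp add: p_def r_def)
      then obtain i where i: "i < k" "y'!(p+i) \<noteq> 0" using nz by (auto simp: nzw_def)
      have "m - j + i - k = p + i" using True by (simp add: p_def)
      then have "b!(m - j + i) = y'!(p + i)" using bk[of "m - j + i"] True by simp
      thus False using bz[OF i(1)] i(2) by simp
    next
      case False2: False
      have "k - (m - j) < k" using j k by simp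
      from bz[OF this] have "b!(m - j + (k - (m - j))) = 0" .
      moreover have "m - j + (k - (m - j)) = k" using False2 by simp
      ultimately show False using bk[of k] y0 by simp
    qed
  qed
qed

lemma Dc_words: "Dc k m \<subseteq> words m" if "k \<le> m"
  using that by (auto simp: Dc_def Gset_def words_def)

lemma Dc_card: "card (Dc k m :: ('a::zero) list set) = card (Gset k (m - k) :: 'a list set)"
  unfolding Dc_def by (rule card_image) (auto simp: inj_on_def)

lemma ext_WMU:
  fixes D :: "('a::finite) list set"
  assumes Dw: "D \<subseteq> words m" and MU: "\<forall>a\<in>D. \<forall>b\<in>D. \<forall>j. 1 \<le> j \<and> j < m \<longrightarrow> take j a \<noteq> drop (m - j) b"
    and m: "m = n - \<kappa> + 1" and k: "1 \<le> \<kappa>" "\<kappa> < n"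
  shows "kappa_WMU \<kappa> n ((\<lambda>(w,v). w @ v) ` (D \<times> words (\<kappa> - 1)))"
    and "card ((\<lambda>(w,v). w @ v) ` (D \<times> words (\<kappa> - 1))) = card D * card (UNIV::'a set) ^ (\<kappa> - 1)"
proof -
  show "kappa_WMU \<kappa> n ((\<lambda>(w,v). w @ v) ` (D \<times> words (\<kappa> - 1)))"
    unfolding kappa_WMU_def
  proof (intro conjI ballI allI impI)
    show "(\<lambda>(w,v). w @ v) ` (D \<times> words (\<kappa> - 1)) \<subseteq> words n"
      using Dw m k by (auto simp: words_def)
    fix a b l
    assume a: "a \<in> (\<lambda>(w,v). w @ v) ` (D \<times> words (\<kappa> - 1))"
      and b: "b \<in> (\<lambda>(w,v). w @ v) ` (D \<times> words (\<kappa> - 1))"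
      and l: "\<kappa> \<le> l \<and> l < n"
    obtain w v where wv: "a = w @ v" "w \<in> D" "length v = \<kappa> - 1" using a by (auto simp: words_def)
    obtain w' v' where wv': "b = w' @ v'" "w' \<in> D" "length v' = \<kappa> - 1" using b by (auto simp: words_def)
    have lw: "length w = m" "length w' = m" using Dw wv wv' by (auto simp: words_def)
    define j where "j = l - \<kappa> + 1"
    have j: "1 \<le> j" "j < m" "j \<le> l" "n - l = m - j" using l k m by (auto simp: j_def)
    show "take l a \<noteq> drop (n - l) b"
    proof
      assume eq: "take l a = drop (n - l) b"
      have "take j w = take j (take l a)" using wv lw j by simp
      also have "\<dots> = take j (drop (n - l) b)" using eq by simp
      also have "\<dots> = take j (drop (m - j) w' @ v')" using wv' lw j by simp
      also have "\<dots> = drop (m - j) w'" using lw j by simp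
      finally show False using MU wv(2) wv'(2) j by blast
    qed
  qed
  have inj: "inj_on (\<lambda>(w,v). w @ v) (D \<times> words (\<kappa> - 1))"
    using Dw by (auto simp: inj_on_def words_def)
  show "card ((\<lambda>(w,v). w @ v) ` (D \<times> words (\<kappa> - 1))) = card D * card (UNIV::'a set) ^ (\<kappa> - 1)"
    by (subst card_image[OF inj]) (simp add: card_cartesian_product words_card)
qed

lemma Dc_nonempty:
  assumes "2 \<le> m"
  shows "1 \<le> card (Dc 1 m :: ('a::{finite,zero_neq_one}) list set)"
proof -
  have "replicate (m - 1) 1 \<in> (Gset 1 (m - 1) :: 'a list set)"
    using assms by (auto simp: Gset_def Aend_def nzw_def)
  moreover have "finite (Gset 1 (m - 1) :: 'a list set)"
    by (rule finite_subset[OF _ words_finite]) (auto simp: Gset_def words_def)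
  ultimately have "card (Gset 1 (m - 1) :: 'a list set) \<noteq> 0" by auto
  thus ?thesis using Dc_card[where 'a='a, of 1 m] by simp
qed

lemma Dc_real:
  assumes k: "1 \<le> k" "k + 2 \<le> m" and Q: "card (UNIV::'a set) = Q"
  shows "real (card (Dc k m :: ('a::{finite,zero}) list set))
     \<ge> (real Q - 1)^2 * real Q ^ m * (real Q ^ k - real m) / (real Q ^ 2 * real Q ^ k * real Q ^ k)"
proof -
  define r where "r = m - k"
  have r: "2 \<le> r" using k by (simp add: r_def)
  have Q1: "Q \<ge> 1" using Q finite_UNIV_card_ge_0[where 'a='a] by simp
  have h: "(Q - 1)^2 * Q ^ (r - 2) \<le> card (Gset k r :: 'a list set) + (r - k - 1) * ((Q - 1)^2 * Q ^ (r - 2 - k))"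
    using card_G[OF k(1) r, where 'a='a] Q by simp
  have cd: "card (Dc k m :: 'a list set) = card (Gset k r :: 'a list set)" using Dc_card by (simp add: r_def)
  have Qr: "real Q > 0" using Q1 by simp
  have e1: "real Q ^ (r - 2) = real Q ^ m / (real Q ^ 2 * real Q ^ k)"
  proof -
    have "real Q ^ (r - 2) * (real Q ^ 2 * real Q ^ k) = real Q ^ (r - 2 + 2 + k)"
      by (simp add: power_add mult.assoc power2_eq_square)
    also have "r - 2 + 2 + k = m" using k r by (simp add: r_def)
    finally have "real Q ^ (r - 2) * (real Q ^ 2 * real Q ^ k) = real Q ^ m" .
    thus ?thesis using Qr by (simp add: field_simps)
  qed
  have e2: "real (r - k - 1) * real Q ^ (r - 2 - k) \<le> real m * real Q ^ m / (real Q ^ 2 * real Q ^ k * real Q ^ k)"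
  proof (cases "r - k - 1 = 0")
    case True thus ?thesis by simp
  next
    case False
    have "real Q ^ (r - 2 - k) * (real Q ^ 2 * real Q ^ k * real Q ^ k) = real Q ^ (r - 2 - k + 2 + k + k)"
      by (simp add: power_add mult.assoc power2_eq_square)
    also have "r - 2 - k + 2 + k + k = m" using k False by (simp add: r_def)
    finally have "real Q ^ (r - 2 - k) * (real Q ^ 2 * real Q ^ k * real Q ^ k) = real Q ^ m" .
    then have "real Q ^ (r - 2 - k) = real Q ^ m / (real Q ^ 2 * real Q ^ k * real Q ^ k)"
      using Qr by (simp add: field_simps)
    moreover have "real (r - k - 1) * (real Q ^ m / (real Q ^ 2 * real Q ^ k * real Q ^ k))
       \<le> real m * (real Q ^ m / (real Q ^ 2 * real Q ^ k * real Q ^ k))"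
      by (rule mult_right_mono) (auto simp: r_def)
    ultimately show ?thesis by simp
  qed
  have "real ((Q - 1)^2 * Q ^ (r - 2)) \<le> real (card (Gset k r :: 'a list set) + (r - k - 1) * ((Q - 1)^2 * Q ^ (r - 2 - k)))"
    using h by (simp only: of_nat_le_iff)
  then have f1: "(real Q - 1)^2 * real Q ^ (r - 2) \<le> real (card (Gset k r :: 'a list set)) + (real Q - 1)^2 * (real (r - k - 1) * real Q ^ (r - 2 - k))"
    using Q1 by (simp only: of_nat_add of_nat_mult of_nat_power of_nat_diff[OF Q1] of_nat_1 mult.assoc)
      (simp add: mult.left_commute)
  have f1': "(real Q - 1)^2 * (real Q ^ m / (real Q ^ 2 * real Q ^ k)) \<le> real (card (Gset k r :: 'a list set)) + (real Q - 1)^2 * (real (r - k - 1) * real Q ^ (r - 2 - k))"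
    using f1 unfolding e1 .
  moreover have "(real Q - 1)^2 * (real (r - k - 1) * real Q ^ (r - 2 - k)) \<le> (real Q - 1)^2 * (real m * real Q ^ m / (real Q ^ 2 * real Q ^ k * real Q ^ k))"
    using e2 by (rule mult_left_mono) simp
  ultimately have "(real Q - 1)^2 * (real Q ^ m / (real Q ^ 2 * real Q ^ k)) - (real Q - 1)^2 * (real m * real Q ^ m / (real Q ^ 2 * real Q ^ k * real Q ^ k))
      \<le> real (card (Gset k r :: 'a list set))" by linarith
  moreover have "(real Q - 1)^2 * (real Q ^ m / (real Q ^ 2 * real Q ^ k)) - (real Q - 1)^2 * (real m * real Q ^ m / (real Q ^ 2 * real Q ^ k * real Q ^ k))
     = (real Q - 1)^2 * real Q ^ m * (real Q ^ k - real m) / (real Q ^ 2 * real Q ^ k * real Q ^ k)"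
    using Qr by (simp add: field_simps)
  ultimately show ?thesis using cd by simp
qed

lemma key_ineq:
  fixes Q m t :: real
  assumes Q: "Q \<ge> 2" and m: "m \<ge> 1" and t: "t > 0"
    and h1: "2*Q*m \<le> (2*Q-1)*t" and h2: "t \<le> 2*Q*m"
  shows "((Q - 1)^2 * (2 * Q - 1) / (4 * Q ^ 4)) * (Q ^ m' / m) \<le> (Q - 1)^2 * Q ^ m' * (t - m) / (Q^2 * t * t)"
proof -
  have "0 \<le> ((2*Q-1)*t - 2*Q*m) * (2*Q*m - t)" using h1 h2 by simp
  then have P: "(2*Q-1)*t^2 \<le> 4*Q^2*m*(t-m)" by (simp add: algebra_simps power2_eq_square)
  define K where "K = (Q - 1)^2 * Q ^ m' / (4 * Q^4 * m * t^2)"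
  have K: "K \<ge> 0" using Q m t by (simp add: K_def)
  have "((Q - 1)^2 * (2 * Q - 1) / (4 * Q ^ 4)) * (Q ^ m' / m) = K * ((2*Q-1)*t^2)"
    using Q m t by (simp add: K_def field_simps power2_eq_square)
  also have "\<dots> \<le> K * (4*Q^2*m*(t-m))" by (rule mult_left_mono[OF P K])
  also have "\<dots> = (Q - 1)^2 * Q ^ m' * (t - m) / (Q^2 * t * t)"
  proof -
    have "Q^4 = Q^2 * Q^2" by (simp add: power2_eq_square eval_nat_numeral)
    thus ?thesis using Q m t unfolding K_def by (simp add: power2_eq_square)
  qed
  finally show ?thesis .
qed

lemma pow2_big: "5 \<le> m \<Longrightarrow> 4 * m \<le> 3 * (2::nat) ^ (m - 2)"
proof (induction m rule: dec_induct)
  case base then show ?case by simp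
next
  case (step n)
  have "Suc n - 2 = Suc (n - 2)" using step.hyps by simp
  then have "2 ^ (Suc n - 2) = 2 * (2::nat) ^ (n - 2)" by simp
  moreover have "4 \<le> 3 * (2::nat) ^ (n - 2)" using step by linarith
  ultimately show ?case using step.IH by simp
qed

lemma pow4_big: "3 \<le> m \<Longrightarrow> 8 * m \<le> 7 * (4::nat) ^ (m - 2)"
proof (induction m rule: dec_induct)
  case base then show ?case by simp
next
  case (step n)
  have "Suc n - 2 = Suc (n - 2)" using step.hyps by simp
  then have "4 ^ (Suc n - 2) = 4 * (4::nat) ^ (n - 2)" by simp
  moreover have "8 \<le> 7 * (4::nat) ^ (n - 2)" using step by linarith
  ultimately show ?case using step.IH by simp
qed

lemma MU_exists:
  fixes q m :: nat
  assumes Q: "card (UNIV::('a::{finite,zero_neq_one}) set) = q" and q: "q \<in> {2,4}" and m: "2 \<le> m"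
  shows "\<exists>D::'a list set. D \<subseteq> words m \<and> (\<forall>a\<in>D. \<forall>b\<in>D. \<forall>j. 1 \<le> j \<and> j < m \<longrightarrow> take j a \<noteq> drop (m - j) b)
     \<and> ((real q - 1)^2 * (2 * real q - 1) / (4 * real q ^ 4)) * (real q ^ m / real m) \<le> real (card D)"
proof -
  define c where "c = (real q - 1)^2 * (2 * real q - 1) / (4 * real q ^ 4)"
  have q2: "q \<ge> 2" using q by auto
  define P where "P = (\<lambda>k. 2*q*m \<le> (2*q-1)*q^k)"
  have ex: "P (2*q*m)"
  proof -
    have "2*q*m < 2^(2*q*m)" by simp
    also have "(2::nat)^(2*q*m) \<le> q^(2*q*m)" using q2 by (rule power_mono) simp
    also have "q^(2*q*m) \<le> (2*q-1)*q^(2*q*m)" using q2 by simp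
    finally show ?thesis unfolding P_def by simp
  qed
  define k where "k = (LEAST k. P k)"
  have Pk: "P k" unfolding k_def by (rule LeastI[of P, OF ex])
  have k1: "1 \<le> k"
  proof (rule ccontr)
    assume "\<not> 1 \<le> k"
    then have "k = 0" by simp
    then have A: "2*q*m \<le> 2*q-1" using Pk by (simp add: P_def)
    have B: "2*q*2 \<le> 2*q*m" by (rule mult_le_mono2[OF m])
    from A B q2 show False by linarith
  qed
  have nP: "\<not> P (k - 1)" unfolding k_def by (rule not_less_Least) (use k1 in \<open>simp add: k_def\<close>)
  then have lt: "(2*q-1)*q^(k-1) < 2*q*m" by (simp add: P_def)
  have qk: "q^k = q * q^(k-1)" using k1 by (metis Suc_diff_1 less_le_trans zero_less_one power_Suc)
  have tk: "q^k \<le> 2*q*m"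
  proof -
    have "(2*q-1)*q^k = q*((2*q-1)*q^(k-1))" by (simp add: qk)
    also have "\<dots> < q*(2*q*m)" using lt q2 by simp
    also have "\<dots> \<le> (2*q-1)*(2*q*m)" using q2 by (intro mult_right_mono) auto
    finally have "(2*q-1)*q^k < (2*q-1)*(2*q*m)" .
    thus ?thesis by simp
  qed
  show ?thesis
  proof (cases "k + 2 \<le> m")
    case True
    define D where "D = (Dc k m :: 'a list set)"
    have "D \<subseteq> words m" unfolding D_def using True by (intro Dc_words) simp
    moreover have "\<forall>a\<in>D. \<forall>b\<in>D. \<forall>j. 1 \<le> j \<and> j < m \<longrightarrow> take j a \<noteq> drop (m - j) b"
      using Dc_MU[of k m] k1 True unfolding D_def by auto
    moreover have "c * (real q ^ m / real m) \<le> real (card D)"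
    proof -
      have r1: "(real q - 1)^2 * real q ^ m * (real q ^ k - real m) / (real q ^ 2 * real q ^ k * real q ^ k) \<le> real (card D)"
        unfolding D_def by (rule Dc_real[OF k1 True Q])
      have "real (2*q*m) \<le> real ((2*q-1)*q^k)" using Pk unfolding P_def by (simp only: of_nat_le_iff)
      then have h1: "2 * real q * real m \<le> (2 * real q - 1) * real q ^ k" using q2 by (simp add: of_nat_diff)
      have "real (q^k) \<le> real (2*q*m)" using tk by (simp only: of_nat_le_iff)
      then have h2: "real q ^ k \<le> 2 * real q * real m" by simp
      have "c * (real q ^ m / real m) \<le> (real q - 1)^2 * real q ^ m * (real q ^ k - real m) / (real q ^ 2 * real q ^ k * real q ^ k)"
        unfolding c_def by (rule key_ineq) (use q2 m h1 h2 in auto)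
      with r1 show ?thesis by linarith
    qed
    ultimately show ?thesis unfolding c_def by blast
  next
    case False
    define D where "D = (Dc 1 m :: 'a list set)"
    have "D \<subseteq> words m" unfolding D_def using m by (intro Dc_words) simp
    moreover have "\<forall>a\<in>D. \<forall>b\<in>D. \<forall>j. 1 \<le> j \<and> j < m \<longrightarrow> take j a \<noteq> drop (m - j) b"
      using Dc_MU[of 1 m] m unfolding D_def by auto
    moreover have "c * (real q ^ m / real m) \<le> real (card D)"
    proof -
      have c1: "1 \<le> real (card D)" using Dc_nonempty[OF m, where 'a='a] unfolding D_def by simp
      have "q^(m-2) \<le> q^(k-1)" using False q2 by (intro power_increasing) auto
      then have "(2*q-1)*q^(m-2) \<le> (2*q-1)*q^(k-1)" by simp
      with lt have small: "(2*q-1)*q^(m-2) < 2*q*m" by linarith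
      have "c * (real q ^ m / real m) \<le> 1"
      proof (cases "q = 2")
        case True
        have "m < 5" using small pow2_big[of m] True by (cases "5 \<le> m") auto
        then have "(2::nat)^m \<le> 2^4" by (intro power_increasing) auto
        then have "real ((2::nat)^m) \<le> real ((2::nat)^4)" by (simp only: of_nat_le_iff)
        then have "real q ^ m \<le> 16" using True by simp
        then have "real q ^ m / real m \<le> 16 / 2" using m
          by (intro frac_le) auto
        thus ?thesis using True by (simp add: c_def)
      next
        case False
        then have q4: "q = 4" using q by auto
        have "m < 3" using small pow4_big[of m] q4 by (cases "3 \<le> m") auto
        then have "m = 2" using m by simp
        thus ?thesis using q4 by (simp add: c_def)
      qed
      with c1 show ?thesis by linarith
    qed
    ultimately show ?thesis unfolding c_def by blast
  qed
qed

theorem theorem3: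
  fixes q n \<kappa> :: nat
    and F :: "'a::{finite,field} itself"
  assumes "card (UNIV :: 'a set) = q"
    and "q \<in> {2, 4}"
    and "1 \<le> \<kappa>" and "\<kappa> < n"
  shows "((real q - 1)^2 * (2 * real q - 1) / (4 * real q ^ 4)) * (real q ^ n / real (n - \<kappa> + 1))
           \<le> real (A_WMU F \<kappa> n)
       \<and> real (A_WMU F \<kappa> n) \<le> real q ^ n / real (n - \<kappa> + 1)"
proof -
  note Q = assms(1) and q = assms(2) and k = assms(3,4)
  define S where "S = {card (C :: 'a list set) | C. kappa_WMU \<kappa> n C}"
  have AS: "A_WMU F \<kappa> n = Max S" by (simp add: A_WMU_def S_def)
  have fS: "finite S"
  proof (rule finite_subset)
    show "S \<subseteq> card ` Pow (words n :: 'a list set)" by (auto simp: S_def kappa_WMU_def)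
    show "finite (card ` Pow (words n :: 'a list set))" using words_finite[where 'a='a, of n] by simp
  qed
  have "kappa_WMU \<kappa> n ({} :: 'a list set)" by (simp add: kappa_WMU_def)
  then have neS: "S \<noteq> {}" by (auto simp: S_def)
  define m where "m = n - \<kappa> + 1"
  have m2: "2 \<le> m" using k by (simp add: m_def)
  have mpos: "real m > 0" using m2 by simp
  have up: "real x \<le> real q ^ n / real m" if xS: "x \<in> S" for x
  proof -
    obtain C :: "'a list set" where C: "x = card C" "kappa_WMU \<kappa> n C" using xS unfolding S_def by blast
    have "card C * m \<le> q ^ n" using upper_nat[OF C(2) k(2)] Q by (simp add: m_def)
    then have "real (card C * m) \<le> real (q ^ n)" by (simp only: of_nat_le_iff)
    then have "real (card C) * real m \<le> real q ^ n" by simp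
    thus ?thesis using C mpos by (simp add: field_simps)
  qed
  have part2: "real (A_WMU F \<kappa> n) \<le> real q ^ n / real m"
    unfolding AS by (rule up) (rule Max_in[OF fS neS])
  obtain D :: "'a list set" where D: "D \<subseteq> words m"
    "\<forall>a\<in>D. \<forall>b\<in>D. \<forall>j. 1 \<le> j \<and> j < m \<longrightarrow> take j a \<noteq> drop (m - j) b"
    "((real q - 1)^2 * (2 * real q - 1) / (4 * real q ^ 4)) * (real q ^ m / real m) \<le> real (card D)"
    using MU_exists[OF Q q m2] by blast
  define E where "E = (\<lambda>(w,v). w @ v) ` (D \<times> (words (\<kappa> - 1) :: 'a list set))"
  have EW: "kappa_WMU \<kappa> n E" and cE: "card E = card D * q ^ (\<kappa> - 1)"
    using ext_WMU[OF D(1) D(2) m_def k] Q unfolding E_def by auto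
  have "card E \<in> S" using EW by (auto simp: S_def)
  then have "card E \<le> Max S" using fS by simp
  then have EA: "real (card E) \<le> real (A_WMU F \<kappa> n)" unfolding AS by simp
  have qn: "real q ^ n = real q ^ m * real q ^ (\<kappa> - 1)"
  proof -
    have "n = m + (\<kappa> - 1)" using k by (simp add: m_def)
    thus ?thesis by (simp add: power_add)
  qed
  define c where "c = (real q - 1)^2 * (2 * real q - 1) / (4 * real q ^ 4)"
  have "c * (real q ^ n / real m) = (c * (real q ^ m / real m)) * real q ^ (\<kappa> - 1)"
    by (simp add: qn)
  also have "\<dots> \<le> real (card D) * real q ^ (\<kappa> - 1)"
    by (rule mult_right_mono) (use D(3) in \<open>auto simp: c_def\<close>)
  also have "\<dots> = real (card E)" by (simp add: cE)
  finally have part1: "c * (real q ^ n / real m) \<le> real (A_WMU F \<kappa> n)" using EA by linarith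
  show ?thesis using part1 part2 by (simp add: c_def m_def)
qed

end
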